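(* Let $\{(G_\alpha,d_\alpha)\}_{\alpha\in\mathbb I}$ be a strict long directed family of metrizable topological groups, $d_\alpha$ a compatible metric on $G_\alpha$, whose bonding maps (inclusions $G_\alpha\to G_\beta$, $\alpha\leq\beta$, which are group homomorphisms) are Lipschitz with a fixed constant $L>0$ (in particular, isometries). Then $\{G_\alpha\}_{\alpha\in\mathbb I}$ satisfies ACP, and the colimit space topology on $G=\bigcup_\alpha G_\alpha$ is generated by the metric $$d(x,y):=\limsup_{\alpha\in\mathbb I}d_\alpha(x,y)=\inf_{\alpha\in\mathbb I}\sup\{d_\beta(x,y)\mid x,y\in G_\beta,\ \beta\geq\alpha\}.$$
   Context: Strict means the bonding maps are topological embeddings; long means every countable subset of $\mathbb I$ has an upper bound. The colimit space topology is $\mathscr T=\{U\subseteq G\mid U\cap G_\alpha\text{ open in }G_\alpha\ \forall\alpha\}$. ACP means $\mathscr T$ coincides with the finest group topology on $G$ making all inclusions continuous (equivalently, $(G,\mathscr T)$ is a topological group). *)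

theory Defs
  imports "HOL-Analysis.Analysis"
begin

text \<open>Groups are modelled as subsets of an ambient group type (class group_add,
  not necessarily commutative); the bonding maps are then the set inclusions,
  which are automatically group homomorphisms.\<close>

definition subgroup_add :: "'g::group_add set \<Rightarrow> bool" where
  "subgroup_add S \<longleftrightarrow> 0 \<in> S \<and> (\<forall>x\<in>S. \<forall>y\<in>S. x + y \<in> S) \<and> (\<forall>x\<in>S. - x \<in> S)"

definition topological_group_on :: "'g::group_add topology \<Rightarrow> bool" where
  "topological_group_on X \<longleftrightarrow> subgroup_add (topspace X)
     \<and> continuous_map (prod_topology X X) X (\<lambda>(x, y). x + y)
     \<and> continuous_map X X uminus"

definition directed_index :: "'i set \<Rightarrow> ('i \<Rightarrow> 'i \<Rightarrow> bool) \<Rightarrow> bool" where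
  "directed_index I le \<longleftrightarrow> I \<noteq> {} \<and> (\<forall>a\<in>I. le a a)
     \<and> (\<forall>a\<in>I. \<forall>b\<in>I. \<forall>c\<in>I. le a b \<longrightarrow> le b c \<longrightarrow> le a c)
     \<and> (\<forall>a\<in>I. \<forall>b\<in>I. \<exists>c\<in>I. le a c \<and> le b c)"

definition long_index :: "'i set \<Rightarrow> ('i \<Rightarrow> 'i \<Rightarrow> bool) \<Rightarrow> bool" where
  "long_index I le \<longleftrightarrow> (\<forall>C. C \<subseteq> I \<and> countable C \<longrightarrow> (\<exists>u\<in>I. \<forall>c\<in>C. le c u))"

definition colimit_topology :: "'i set \<Rightarrow> ('i \<Rightarrow> 'g topology) \<Rightarrow> 'g topology" where
  "colimit_topology I T = topology (\<lambda>U. U \<subseteq> (\<Union>a\<in>I. topspace (T a))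
      \<and> (\<forall>a\<in>I. openin (T a) (U \<inter> topspace (T a))))"

definition ACP :: "'i set \<Rightarrow> ('i \<Rightarrow> 'g::group_add topology) \<Rightarrow> bool" where
  "ACP I T \<longleftrightarrow>
     (let C = colimit_topology I T; G = (\<Union>a\<in>I. topspace (T a)) in
       topological_group_on C \<and> topspace C = G
       \<and> (\<forall>a\<in>I. continuous_map (T a) C id)
       \<and> (\<forall>S. topological_group_on S \<and> topspace S = G
              \<and> (\<forall>a\<in>I. continuous_map (T a) S id)
              \<longrightarrow> (\<forall>U. openin S U \<longrightarrow> openin C U)))"

definition limsup_metric ::
  "'i set \<Rightarrow> ('i \<Rightarrow> 'i \<Rightarrow> bool) \<Rightarrow> ('i \<Rightarrow> 'g set) \<Rightarrow> ('i \<Rightarrow> 'g \<Rightarrow> 'g \<Rightarrow> real) \<Rightarrow> 'g \<Rightarrow> 'g \<Rightarrow> real" where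
  "limsup_metric I le G d x y = real_of_ereal
     (INF a\<in>I. SUP b\<in>{b\<in>I. le a b \<and> x \<in> G b \<and> y \<in> G b}. ereal (d b x y))"

end

theory Submission
  imports Defs
begin

locale cs =
  fixes I :: "'i set" and le :: "'i \<Rightarrow> 'i \<Rightarrow> bool"
    and G :: "'i \<Rightarrow> 'g::group_add set" and d :: "'i \<Rightarrow> 'g \<Rightarrow> 'g \<Rightarrow> real" and L :: real
  assumes dir: "directed_index I le"
    and long: "long_index I le"
    and metric: "\<And>a. a \<in> I \<Longrightarrow> Metric_space (G a) (d a)"
    and topgrp: "\<And>a. a \<in> I \<Longrightarrow> topological_group_on (Metric_space.mtopology (G a) (d a))"
    and mono: "\<And>a b. a \<in> I \<Longrightarrow> b \<in> I \<Longrightarrow> le a b \<Longrightarrow> G a \<subseteq> G b"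
    and Lpos: "L > 0"
    and lip: "\<And>a b x y. a \<in> I \<Longrightarrow> b \<in> I \<Longrightarrow> le a b \<Longrightarrow> x \<in> G a \<Longrightarrow> y \<in> G a \<Longrightarrow>
       d b x y \<le> L * d a x y"
begin

abbreviation T where "T a \<equiv> Metric_space.mtopology (G a) (d a)"
definition GG where "GG = (\<Union>a\<in>I. G a)"
definition E where "E x y a = (SUP b\<in>{b\<in>I. le a b \<and> x \<in> G b \<and> y \<in> G b}. ereal (d b x y))"
abbreviation D where "D \<equiv> limsup_metric I le G d"

lemma D_def': "D x y = real_of_ereal (INF a\<in>I. E x y a)"
  by (simp add: limsup_metric_def E_def)

lemma Ine: "I \<noteq> {}" using dir by (simp add: directed_index_def)
lemma lrefl: "a \<in> I \<Longrightarrow> le a a" using dir by (simp add: directed_index_def)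
lemma ltrans: "a \<in> I \<Longrightarrow> b \<in> I \<Longrightarrow> c \<in> I \<Longrightarrow> le a b \<Longrightarrow> le b c \<Longrightarrow> le a c"
  using dir unfolding directed_index_def by blast
lemma ub: "a \<in> I \<Longrightarrow> b \<in> I \<Longrightarrow> \<exists>c\<in>I. le a c \<and> le b c"
  using dir unfolding directed_index_def by blast

lemma topsp: "a \<in> I \<Longrightarrow> topspace (T a) = G a"
  using Metric_space.topspace_mtopology[OF metric] by blast

lemma subg: "a \<in> I \<Longrightarrow> subgroup_add (G a)"
  using topgrp[of a] topsp[of a] by (simp add: topological_group_on_def)

lemma common: "x \<in> GG \<Longrightarrow> y \<in> GG \<Longrightarrow> \<exists>c\<in>I. x \<in> G c \<and> y \<in> G c"
proof -
  assume "x \<in> GG" "y \<in> GG"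
  then obtain a b where ab: "a \<in> I" "b \<in> I" "x \<in> G a" "y \<in> G b" by (auto simp: GG_def)
  then obtain c where "c \<in> I" "le a c" "le b c" using ub by blast
  then show ?thesis using ab mono by blast
qed

lemma above: "x \<in> G a0 \<Longrightarrow> a0 \<in> I \<Longrightarrow> a \<in> I \<Longrightarrow> \<exists>c\<in>I. le a c \<and> x \<in> G c"
  using ub mono by blast

lemma E_upper: "a0 \<in> I \<Longrightarrow> x \<in> G a0 \<Longrightarrow> y \<in> G a0 \<Longrightarrow> E x y a0 \<le> ereal (L * d a0 x y)"
  unfolding E_def by (rule SUP_least) (auto intro: lip)

lemma E_nonneg: "x \<in> GG \<Longrightarrow> y \<in> GG \<Longrightarrow> a \<in> I \<Longrightarrow> 0 \<le> E x y a"
proof -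
  assume xy: "x \<in> GG" "y \<in> GG" and a: "a \<in> I"
  obtain c where c: "c \<in> I" "x \<in> G c" "y \<in> G c" using common[OF xy] by blast
  obtain c' where c': "c' \<in> I" "le a c'" "le c c'" using ub[OF a c(1)] by blast
  have "x \<in> G c'" "y \<in> G c'" using mono[OF c(1) c'(1) c'(3)] c by auto
  then have "c' \<in> {b\<in>I. le a b \<and> x \<in> G b \<and> y \<in> G b}" using c' by auto
  moreover have "0 \<le> ereal (d c' x y)" using Metric_space.nonneg[OF metric[OF c'(1)]] by simp
  ultimately show ?thesis unfolding E_def by (rule SUP_upper2)
qed

lemma INF_eq: assumes a0: "a0 \<in> I" and xy: "x \<in> G a0" "y \<in> G a0"
  shows "(INF a\<in>I. E x y a) = ereal (D x y)" "D x y \<le> L * d a0 x y" "0 \<le> D x y"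
proof -
  have g: "x \<in> GG" "y \<in> GG" using a0 xy by (auto simp: GG_def)
  have up0: "(INF a\<in>I. E x y a) \<le> E x y a0" by (rule INF_lower[OF a0])
  have up: "(INF a\<in>I. E x y a) \<le> ereal (L * d a0 x y)"
    using up0 E_upper[OF a0 xy] by (rule order_trans)
  have lo: "0 \<le> (INF a\<in>I. E x y a)" by (rule INF_greatest) (use E_nonneg g in auto)
  from up lo obtain r where r: "(INF a\<in>I. E x y a) = ereal r" "0 \<le> r" "r \<le> L * d a0 x y"
    by (cases "(INF a\<in>I. E x y a)") auto
  then show "(INF a\<in>I. E x y a) = ereal (D x y)" "D x y \<le> L * d a0 x y" "0 \<le> D x y"
    by (auto simp: D_def')
qed

lemma INF_eq': "x \<in> GG \<Longrightarrow> y \<in> GG \<Longrightarrow> (INF a\<in>I. E x y a) = ereal (D x y)"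
  using common INF_eq(1) by blast

lemma D_bound: "a \<in> I \<Longrightarrow> x \<in> G a \<Longrightarrow> y \<in> G a \<Longrightarrow> D x y \<le> L * d a x y"
  using INF_eq(2) by blast

lemma D_lt: assumes xy: "x \<in> GG" "y \<in> GG" and r: "D x y < r"
  shows "\<exists>a\<in>I. \<forall>b\<in>I. le a b \<longrightarrow> x \<in> G b \<and> y \<in> G b \<and> d b x y < r"
proof -
  have "(INF a\<in>I. E x y a) < ereal r" using INF_eq'[OF xy] r by simp
  then obtain a where a: "a \<in> I" "E x y a < ereal r" by (auto simp: INF_less_iff)
  obtain c where c: "c \<in> I" "x \<in> G c" "y \<in> G c" using common[OF xy] by blast
  obtain a' where a': "a' \<in> I" "le a a'" "le c a'" using ub[OF a(1) c(1)] by blast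
  show ?thesis
  proof (intro bexI[OF _ a'(1)] ballI impI)
    fix b assume b: "b \<in> I" "le a' b"
    have lab: "le a b" "le c b" using ltrans a' b c(1) a(1) by blast+
    have xyb: "x \<in> G b" "y \<in> G b" using mono[OF c(1) b(1) lab(2)] c by auto
    have "ereal (d b x y) \<le> E x y a" unfolding E_def
      by (rule SUP_upper) (use b lab xyb in auto)
    then have "ereal (d b x y) < ereal r" using a(2) by (rule order.strict_trans1)
    then have "d b x y < r" by simp
    then show "x \<in> G b \<and> y \<in> G b \<and> d b x y < r" using xyb by auto
  qed
qed

lemma D_le: assumes xy: "x \<in> GG" "y \<in> GG" and a: "a \<in> I"
  and h: "\<And>b. b \<in> I \<Longrightarrow> le a b \<Longrightarrow> x \<in> G b \<Longrightarrow> y \<in> G b \<Longrightarrow> d b x y \<le> s"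
  shows "D x y \<le> s"
proof -
  have "E x y a \<le> ereal s" unfolding E_def by (rule SUP_least) (use h in auto)
  then have "(INF a\<in>I. E x y a) \<le> ereal s" using INF_lower2[OF a] by blast
  then show ?thesis using INF_eq'[OF xy] by simp
qed

lemma E_cases: "0 \<le> E x y a \<or> E x y a = -\<infinity>"
proof (cases "{b\<in>I. le a b \<and> x \<in> G b \<and> y \<in> G b} = {}")
  case True
  have "E x y a = -\<infinity>" unfolding E_def True by (simp add: bot_ereal_def)
  then show ?thesis by (rule disjI2)
next
  case False
  then obtain b where b: "b \<in> {b\<in>I. le a b \<and> x \<in> G b \<and> y \<in> G b}" by blast
  have b1: "b \<in> I" using b by simp
  have "0 \<le> ereal (d b x y)" using Metric_space.nonneg[OF metric[OF b1]] by simp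
  then have "0 \<le> E x y a" unfolding E_def by (rule SUP_upper2[OF b])
  then show ?thesis by (rule disjI1)
qed

lemma D_nonneg: "0 \<le> D x y"
proof (cases "\<forall>a\<in>I. 0 \<le> E x y a")
  case True
  then have "0 \<le> (INF a\<in>I. E x y a)" by (simp add: le_INF_iff)
  then show ?thesis by (simp add: D_def' real_of_ereal_pos)
next
  case False
  then obtain a where "a \<in> I" "E x y a = -\<infinity>" using E_cases by blast
  then have "(INF a\<in>I. E x y a) = -\<infinity>" by (metis INF_lower MInfty_eq_minfinity ereal_infty_less_eq(2))
  then show ?thesis by (simp add: D_def')
qed

lemma D_commute: "D x y = D y x"
proof -
  have eq: "(SUP b\<in>{b\<in>I. le a b \<and> x \<in> G b \<and> y \<in> G b}. ereal (d b x y)) =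
    (SUP b\<in>{b\<in>I. le a b \<and> y \<in> G b \<and> x \<in> G b}. ereal (d b y x))" for a
  proof (rule SUP_cong)
    show "{b\<in>I. le a b \<and> x \<in> G b \<and> y \<in> G b} = {b\<in>I. le a b \<and> y \<in> G b \<and> x \<in> G b}" by blast
    fix b assume "b \<in> {b\<in>I. le a b \<and> y \<in> G b \<and> x \<in> G b}"
    then have "b \<in> I" by simp
    then show "ereal (d b x y) = ereal (d b y x)" using Metric_space.commute[OF metric] by metis
  qed
  show ?thesis unfolding limsup_metric_def eq ..
qed

lemma longseq: fixes h1 h2 :: "nat \<Rightarrow> 'i" assumes "a0 \<in> I" "\<And>n. h1 n \<in> I" "\<And>n. h2 n \<in> I"
  shows "\<exists>u\<in>I. le a0 u \<and> (\<forall>n. le (h1 n) u) \<and> (\<forall>n. le (h2 n) u)"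
proof -
  have "insert a0 (range h1 \<union> range h2) \<subseteq> I \<and> countable (insert a0 (range h1 \<union> range h2))"
    using assms by auto
  then obtain u where "u \<in> I" "\<forall>c\<in>insert a0 (range h1 \<union> range h2). le c u"
    using long unfolding long_index_def by blast
  then show ?thesis by auto
qed

lemma small_le0: assumes "\<And>n. (z::real) < inverse (real (Suc n))" shows "z \<le> 0"
proof (rule ccontr)
  assume "\<not> z \<le> 0"
  then have "0 < z" by simp
  then obtain n where "inverse (real (Suc n)) < z" using reals_Archimedean by blast
  then show False using assms[of n] by simp
qed

lemma D_zero: assumes xy: "x \<in> GG" "y \<in> GG" shows "D x y = 0 \<longleftrightarrow> x = y"
proof
  assume xy_eq: "x = y"
  obtain c where c: "c \<in> I" "x \<in> G c" "y \<in> G c" using common[OF xy] by blast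
  have "d c x y = 0" using Metric_space.zero[OF metric[OF c(1)] c(2,3)] xy_eq by simp
  moreover have "D x y \<le> L * d c x y" by (rule D_bound[OF c])
  moreover have "0 \<le> D x y" by (rule D_nonneg)
  ultimately show "D x y = 0" by simp
next
  assume D0: "D x y = 0"
  have "\<forall>n. \<exists>a\<in>I. \<forall>b\<in>I. le a b \<longrightarrow> x \<in> G b \<and> y \<in> G b \<and> d b x y < inverse (real (Suc n))"
  proof
    fix n
    have "D x y < inverse (real (Suc n))" using D0 by simp
    then show "\<exists>a\<in>I. \<forall>b\<in>I. le a b \<longrightarrow> x \<in> G b \<and> y \<in> G b \<and> d b x y < inverse (real (Suc n))"
      by (rule D_lt[OF xy])
  qed
  then have "\<forall>n. \<exists>a. a \<in> I \<and> (\<forall>b\<in>I. le a b \<longrightarrow> x \<in> G b \<and> y \<in> G b \<and> d b x y < inverse (real (Suc n)))"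
    by blast
  from choice[OF this] obtain h where h0: "\<forall>n. h n \<in> I \<and> (\<forall>b\<in>I. le (h n) b \<longrightarrow> x \<in> G b \<and> y \<in> G b \<and> d b x y < inverse (real (Suc n)))"
    by blast
  then have h: "\<And>n. h n \<in> I"
    "\<And>n b. b \<in> I \<Longrightarrow> le (h n) b \<Longrightarrow> x \<in> G b \<and> y \<in> G b \<and> d b x y < inverse (real (Suc n))"
    by auto
  obtain u where u: "u \<in> I" "\<And>n. le (h n) u" using longseq[of "h 0" h h] h(1) by blast
  have xu: "x \<in> G u" "y \<in> G u" using h(2)[OF u(1) u(2)] by auto
  have "d u x y \<le> 0" by (rule small_le0) (use h(2)[OF u(1) u(2)] in auto)
  moreover have "0 \<le> d u x y" by (rule Metric_space.nonneg[OF metric[OF u(1)]])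
  ultimately have "d u x y = 0" by simp
  then show "x = y" using Metric_space.zero[OF metric[OF u(1)] xu] by simp
qed

lemma D_triangle: assumes xyz: "x \<in> GG" "y \<in> GG" "z \<in> GG" shows "D x z \<le> D x y + D y z"
proof (rule field_le_epsilon)
  fix e :: real assume e: "0 < e"
  obtain a1 where a1: "a1 \<in> I" "\<And>b. b \<in> I \<Longrightarrow> le a1 b \<Longrightarrow> x \<in> G b \<and> y \<in> G b \<and> d b x y < D x y + e/2"
    using D_lt[OF xyz(1,2), of "D x y + e/2"] e by auto
  obtain a2 where a2: "a2 \<in> I" "\<And>b. b \<in> I \<Longrightarrow> le a2 b \<Longrightarrow> y \<in> G b \<and> z \<in> G b \<and> d b y z < D y z + e/2"
    using D_lt[OF xyz(2,3), of "D y z + e/2"] e by auto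
  obtain a where a: "a \<in> I" "le a1 a" "le a2 a" using ub[OF a1(1) a2(1)] by blast
  show "D x z \<le> D x y + D y z + e"
  proof (rule D_le[OF xyz(1,3) a(1)])
    fix b assume b: "b \<in> I" "le a b" "x \<in> G b" "z \<in> G b"
    have "le a1 b" "le a2 b" using ltrans a b a1(1) a2(1) by blast+
    then have 1: "x \<in> G b \<and> y \<in> G b \<and> d b x y < D x y + e/2" "y \<in> G b \<and> z \<in> G b \<and> d b y z < D y z + e/2"
      using a1(2) a2(2) b(1) by auto
    have "d b x z \<le> d b x y + d b y z" using Metric_space.triangle[OF metric[OF b(1)]] 1 by auto
    then show "d b x z \<le> D x y + D y z + e" using 1 by linarith
  qed
qed

lemma MS: "Metric_space GG D"
  by (rule Metric_space.intro[OF D_nonneg D_commute D_zero D_triangle])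


interpretation MD: Metric_space GG D by (rule MS)

lemma ex_seq_idx:
  assumes xs: "x \<in> GG" "\<And>n. X n \<in> GG" "\<And>n. D x (X n) < inverse (real (Suc n))"
  shows "\<exists>h. (\<forall>n. h n \<in> I) \<and> (\<forall>n b. b \<in> I \<longrightarrow> le (h n) b \<longrightarrow> x \<in> G b \<and> X n \<in> G b \<and> d b x (X n) < inverse (real (Suc n)))"
proof -
  have "\<forall>n. \<exists>a\<in>I. \<forall>b\<in>I. le a b \<longrightarrow> x \<in> G b \<and> X n \<in> G b \<and> d b x (X n) < inverse (real (Suc n))"
    using D_lt xs by blast
  then have "\<forall>n. \<exists>a. a \<in> I \<and> (\<forall>b\<in>I. le a b \<longrightarrow> x \<in> G b \<and> X n \<in> G b \<and> d b x (X n) < inverse (real (Suc n)))"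
    by blast
  from choice[OF this] show ?thesis by blast
qed

lemma open_iff: "openin MD.mtopology U \<longleftrightarrow> U \<subseteq> GG \<and> (\<forall>a\<in>I. openin (T a) (U \<inter> G a))"
proof
  assume U: "openin MD.mtopology U"
  then have sub: "U \<subseteq> GG" by (simp add: MD.openin_mtopology)
  moreover have "openin (T a) (U \<inter> G a)" if a: "a \<in> I" for a
  proof -
    interpret Ma: Metric_space "G a" "d a" by (rule metric[OF a])
    show ?thesis
    unfolding Ma.openin_mtopology
  proof (intro conjI allI impI)
    show "U \<inter> G a \<subseteq> G a" by auto
    fix x assume x: "x \<in> U \<inter> G a"
    have "\<exists>r>0. MD.mball x r \<subseteq> U" using U x unfolding MD.openin_mtopology by blast
    then obtain r where r: "r > 0" "MD.mball x r \<subseteq> U" by blast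
    show "\<exists>r>0. Ma.mball x r \<subseteq> U \<inter> G a"
    proof (intro exI conjI)
      show "r / L > 0" using r Lpos by simp
      show "Ma.mball x (r / L) \<subseteq> U \<inter> G a"
      proof
        fix y assume "y \<in> Ma.mball x (r / L)"
        then have y: "y \<in> G a" "d a x y < r / L" by auto
        have "D x y \<le> L * d a x y" using D_bound[OF a] x y by auto
        also have "\<dots> < r" using y(2) Lpos by (simp add: field_simps)
        finally have Dl: "D x y < r" .
        have "x \<in> GG" "y \<in> GG" using x y a by (auto simp: GG_def)
        then have "y \<in> MD.mball x r" using Dl by simp
        then show "y \<in> U \<inter> G a" using r y by auto
      qed
    qed
  qed
  qed
  ultimately show "U \<subseteq> GG \<and> (\<forall>a\<in>I. openin (T a) (U \<inter> G a))" by blast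
next
  assume U: "U \<subseteq> GG \<and> (\<forall>a\<in>I. openin (T a) (U \<inter> G a))"
  show "openin MD.mtopology U"
    unfolding MD.openin_mtopology
  proof (intro conjI allI impI)
    show "U \<subseteq> GG" using U by blast
    fix x assume x: "x \<in> U"
    show "\<exists>r>0. MD.mball x r \<subseteq> U"
    proof (rule ccontr)
      assume neg: "\<not> ?thesis"
      have "\<forall>n. \<exists>y. y \<in> GG \<and> D x y < inverse (real (Suc n)) \<and> y \<notin> U"
      proof
        fix n
        have pos: "0 < inverse (real (Suc n))" by simp
        have "\<not> MD.mball x (inverse (real (Suc n))) \<subseteq> U" using neg pos by blast
        then show "\<exists>y. y \<in> GG \<and> D x y < inverse (real (Suc n)) \<and> y \<notin> U" by auto
      qed
      from choice[OF this] obtain X where X0: "\<forall>n. X n \<in> GG \<and> D x (X n) < inverse (real (Suc n)) \<and> X n \<notin> U"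
        by blast
      then have X: "\<And>n. X n \<in> GG" "\<And>n. D x (X n) < inverse (real (Suc n))" "\<And>n. X n \<notin> U"
        by auto
      have xG: "x \<in> GG" using x U by blast
      obtain h where h: "\<And>n. h n \<in> I" "\<And>n b. b \<in> I \<Longrightarrow> le (h n) b \<Longrightarrow> x \<in> G b \<and> X n \<in> G b \<and> d b x (X n) < inverse (real (Suc n))"
        using ex_seq_idx[OF xG X(1,2)] by blast
      obtain u where u: "u \<in> I" "\<And>n. le (h n) u" using longseq[of "h 0" h h] h(1) by blast
      have hu: "\<And>n. x \<in> G u \<and> X n \<in> G u \<and> d u x (X n) < inverse (real (Suc n))" using h(2)[OF u(1) u(2)] by blast
      interpret Mu: Metric_space "G u" "d u" by (rule metric[OF u(1)])
      have "openin (T u) (U \<inter> G u)" using U u by blast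
      moreover have "x \<in> U \<inter> G u" using x hu[of 0] by blast
      ultimately have "\<exists>r>0. Mu.mball x r \<subseteq> U \<inter> G u" unfolding Mu.openin_mtopology by blast
      then obtain r where r: "r > 0" "Mu.mball x r \<subseteq> U \<inter> G u" by blast
      obtain n where n: "inverse (real (Suc n)) < r" using reals_Archimedean[OF r(1)] by blast
      have "X n \<in> Mu.mball x r"
        using hu[of n] n by auto
      then show False using r X(3) by blast
    qed
  qed
qed

lemma colim_eq: "colimit_topology I T = MD.mtopology"
proof -
  have "(\<lambda>U. U \<subseteq> (\<Union>a\<in>I. topspace (T a)) \<and> (\<forall>a\<in>I. openin (T a) (U \<inter> topspace (T a))))
        = openin MD.mtopology"
  proof -
    have e: "(\<Union>a\<in>I. topspace (T a)) = GG" by (simp add: topsp GG_def)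
    have "\<And>U. U \<inter> topspace (T a) = U \<inter> G a" if "a \<in> I" for a using topsp[OF that] by simp
    then show ?thesis unfolding e by (intro ext) (simp add: open_iff)
  qed
  then show ?thesis unfolding colimit_topology_def by (simp add: openin_inverse)
qed


lemma addT: assumes u: "u \<in> I" and xy: "x \<in> G u" "y \<in> G u" and W: "openin (T u) W" "x + y \<in> W"
  shows "\<exists>r>0. \<forall>x' y'. x' \<in> G u \<longrightarrow> y' \<in> G u \<longrightarrow> d u x x' < r \<longrightarrow> d u y y' < r \<longrightarrow> x' + y' \<in> W"
proof -
  interpret Mu: Metric_space "G u" "d u" by (rule metric[OF u])
  have cm: "continuous_map (prod_topology Mu.mtopology Mu.mtopology) Mu.mtopology (\<lambda>(x, y). x + y)"
    using topgrp[OF u] unfolding topological_group_on_def by (elim conjE)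
  have op: "openin (prod_topology Mu.mtopology Mu.mtopology)
      {p \<in> topspace (prod_topology Mu.mtopology Mu.mtopology). (\<lambda>(x, y). x + y) p \<in> W}"
    using cm[unfolded continuous_map_def, THEN conjunct2, rule_format, OF W(1)] .
  have mem: "(x, y) \<in> {p \<in> topspace (prod_topology Mu.mtopology Mu.mtopology). (\<lambda>(x, y). x + y) p \<in> W}"
    using xy W(2) by (simp add: topspace_prod_topology)
  have "\<exists>A B. openin Mu.mtopology A \<and> openin Mu.mtopology B \<and> x \<in> A \<and> y \<in> B \<and>
    A \<times> B \<subseteq> {p \<in> topspace (prod_topology Mu.mtopology Mu.mtopology). (\<lambda>(x, y). x + y) p \<in> W}"
    using op[unfolded openin_prod_topology_alt, rule_format, OF mem] .
  then obtain A B where AB: "openin Mu.mtopology A" "openin Mu.mtopology B" "x \<in> A" "y \<in> B"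
    "A \<times> B \<subseteq> {p \<in> topspace (prod_topology Mu.mtopology Mu.mtopology). (\<lambda>(x, y). x + y) p \<in> W}"
    by blast
  have "\<exists>r>0. Mu.mball x r \<subseteq> A" using AB(1,3) unfolding Mu.openin_mtopology by blast
  then obtain r1 where r1: "r1 > 0" "Mu.mball x r1 \<subseteq> A" by blast
  have "\<exists>r>0. Mu.mball y r \<subseteq> B" using AB(2,4) unfolding Mu.openin_mtopology by blast
  then obtain r2 where r2: "r2 > 0" "Mu.mball y r2 \<subseteq> B" by blast
  show ?thesis
  proof (intro exI[of _ "min r1 r2"] conjI allI impI)
    show "min r1 r2 > 0" using r1 r2 by simp
    fix x' y' assume h: "x' \<in> G u" "y' \<in> G u" "d u x x' < min r1 r2" "d u y y' < min r1 r2"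
    have "x' \<in> Mu.mball x r1" using h xy(1) by simp
    then have xA: "x' \<in> A" using r1(2) by blast
    have "y' \<in> Mu.mball y r2" using h xy(2) by simp
    then have yB: "y' \<in> B" using r2(2) by blast
    have "(x', y') \<in> A \<times> B" using xA yB by blast
    then have "(x', y') \<in> {p \<in> topspace (prod_topology Mu.mtopology Mu.mtopology). (\<lambda>(x, y). x + y) p \<in> W}"
      using AB(5) by blast
    then show "x' + y' \<in> W" by simp
  qed
qed

lemma negT: assumes u: "u \<in> I" and x: "x \<in> G u" and W: "openin (T u) W" "- x \<in> W"
  shows "\<exists>r>0. \<forall>x'. x' \<in> G u \<longrightarrow> d u x x' < r \<longrightarrow> - x' \<in> W"
proof -
  interpret Mu: Metric_space "G u" "d u" by (rule metric[OF u])
  have cm: "continuous_map Mu.mtopology Mu.mtopology uminus"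
    using topgrp[OF u] unfolding topological_group_on_def by (elim conjE)
  have "openin Mu.mtopology {p \<in> topspace Mu.mtopology. - p \<in> W}"
    using cm[unfolded continuous_map_def, THEN conjunct2, rule_format, OF W(1)] .
  then have "openin Mu.mtopology {p \<in> G u. - p \<in> W}" by simp
  moreover have "x \<in> {p \<in> G u. - p \<in> W}" using x W(2) by blast
  ultimately have "\<exists>r>0. Mu.mball x r \<subseteq> {p \<in> G u. - p \<in> W}" unfolding Mu.openin_mtopology by blast
  then obtain r where r: "r > 0" "Mu.mball x r \<subseteq> {p \<in> G u. - p \<in> W}" by blast
  show ?thesis
  proof (intro exI[of _ r] conjI allI impI)
    show "r > 0" by (rule r(1))
    fix x' assume "x' \<in> G u" "d u x x' < r"
    then have "x' \<in> Mu.mball x r" using x by simp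
    then show "- x' \<in> W" using r(2) by blast
  qed
qed

lemma subGG: "subgroup_add GG"
  unfolding subgroup_add_def
proof (intro conjI ballI)
  obtain a where a: "a \<in> I" using Ine by blast
  then show "0 \<in> GG" using subg[OF a] by (auto simp: GG_def subgroup_add_def)
  fix x assume x: "x \<in> GG"
  then obtain a where a: "a \<in> I" "x \<in> G a" by (auto simp: GG_def)
  then show "- x \<in> GG" using subg[OF a(1)] by (auto simp: GG_def subgroup_add_def)
  fix y assume y: "y \<in> GG"
  obtain c where c: "c \<in> I" "x \<in> G c" "y \<in> G c" using common[OF x y] by blast
  then show "x + y \<in> GG" using subg[OF c(1)] by (auto simp: GG_def subgroup_add_def)
qed

lemma add_cont: "continuous_map (prod_topology MD.mtopology MD.mtopology) MD.mtopology (\<lambda>(x, y). x + y)"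
  unfolding continuous_map_def
proof (intro conjI allI impI)
  show "(\<lambda>(x, y). x + y) \<in> topspace (prod_topology MD.mtopology MD.mtopology) \<rightarrow> topspace MD.mtopology"
    using subGG by (auto simp: subgroup_add_def)
  fix U assume U: "openin MD.mtopology U"
  show "openin (prod_topology MD.mtopology MD.mtopology)
      {p \<in> topspace (prod_topology MD.mtopology MD.mtopology). (\<lambda>(x, y). x + y) p \<in> U}"
    unfolding openin_prod_topology_alt
  proof (intro allI impI)
    fix x y assume "(x, y) \<in> {p \<in> topspace (prod_topology MD.mtopology MD.mtopology). (\<lambda>(x, y). x + y) p \<in> U}"
    then have xy: "x \<in> GG" "y \<in> GG" "x + y \<in> U" by auto
    have "\<exists>r>0. \<forall>x' y'. x' \<in> GG \<longrightarrow> y' \<in> GG \<longrightarrow> D x x' < r \<longrightarrow> D y y' < r \<longrightarrow> x' + y' \<in> U"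
    proof (rule ccontr)
      assume neg: "\<not> ?thesis"
      have "\<forall>n. \<exists>p. fst p \<in> GG \<and> snd p \<in> GG \<and> D x (fst p) < inverse (real (Suc n)) \<and> D y (snd p) < inverse (real (Suc n)) \<and> fst p + snd p \<notin> U"
      proof
        fix n
        have pos: "0 < inverse (real (Suc n))" by simp
        then obtain x' y' where "x' \<in> GG \<and> y' \<in> GG \<and> D x x' < inverse (real (Suc n)) \<and> D y y' < inverse (real (Suc n)) \<and> x' + y' \<notin> U"
          using neg by blast
        then show "\<exists>p. fst p \<in> GG \<and> snd p \<in> GG \<and> D x (fst p) < inverse (real (Suc n)) \<and> D y (snd p) < inverse (real (Suc n)) \<and> fst p + snd p \<notin> U"
          by (intro exI[of _ "(x', y')"]) simp
      qed
      from choice[OF this] obtain P where P: "\<forall>n. fst (P n) \<in> GG \<and> snd (P n) \<in> GG \<and> D x (fst (P n)) < inverse (real (Suc n)) \<and> D y (snd (P n)) < inverse (real (Suc n)) \<and> fst (P n) + snd (P n) \<notin> U"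
        by blast
      define X where "X n = fst (P n)" for n
      define Y where "Y n = snd (P n)" for n
      have XY: "\<And>n. X n \<in> GG" "\<And>n. Y n \<in> GG" "\<And>n. D x (X n) < inverse (real (Suc n))"
        "\<And>n. D y (Y n) < inverse (real (Suc n))" "\<And>n. X n + Y n \<notin> U"
        using P unfolding X_def Y_def by auto
      obtain h1 where h1: "\<And>n. h1 n \<in> I" "\<And>n b. b \<in> I \<Longrightarrow> le (h1 n) b \<Longrightarrow> x \<in> G b \<and> X n \<in> G b \<and> d b x (X n) < inverse (real (Suc n))"
        using ex_seq_idx[OF xy(1) XY(1,3)] by blast
      obtain h2 where h2: "\<And>n. h2 n \<in> I" "\<And>n b. b \<in> I \<Longrightarrow> le (h2 n) b \<Longrightarrow> y \<in> G b \<and> Y n \<in> G b \<and> d b y (Y n) < inverse (real (Suc n))"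
        using ex_seq_idx[OF xy(2) XY(2,4)] by blast
      obtain u where u: "u \<in> I" "\<And>n. le (h1 n) u" "\<And>n. le (h2 n) u" using longseq[of "h1 0" h1 h2] h1(1) h2(1) by blast
      have hu1: "\<And>n. x \<in> G u \<and> X n \<in> G u \<and> d u x (X n) < inverse (real (Suc n))" using h1(2)[OF u(1) u(2)] by blast
      have hu2: "\<And>n. y \<in> G u \<and> Y n \<in> G u \<and> d u y (Y n) < inverse (real (Suc n))" using h2(2)[OF u(1) u(3)] by blast
      have W: "openin (T u) (U \<inter> G u)" using U u open_iff by blast
      have "x + y \<in> U \<inter> G u" using xy hu1 hu2 subg[OF u(1)] by (auto simp: subgroup_add_def)
      then obtain r where r: "r > 0" "\<forall>x' y'. x' \<in> G u \<longrightarrow> y' \<in> G u \<longrightarrow> d u x x' < r \<longrightarrow> d u y y' < r \<longrightarrow> x' + y' \<in> U \<inter> G u"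
        using addT[OF u(1) _ _ W] hu1 hu2 by meson
      obtain n where n: "inverse (real (Suc n)) < r" using reals_Archimedean[OF r(1)] by blast
      have "X n + Y n \<in> U" using r(2) hu1[of n] hu2[of n] n by auto
      then show False using XY(5) by blast
    qed
    then obtain r where r: "r > 0" "\<forall>x' y'. x' \<in> GG \<longrightarrow> y' \<in> GG \<longrightarrow> D x x' < r \<longrightarrow> D y y' < r \<longrightarrow> x' + y' \<in> U"
      by blast
    show "\<exists>A B. openin MD.mtopology A \<and> openin MD.mtopology B \<and> x \<in> A \<and> y \<in> B \<and>
        A \<times> B \<subseteq> {p \<in> topspace (prod_topology MD.mtopology MD.mtopology). (\<lambda>(x, y). x + y) p \<in> U}"
      by (rule exI[of _ "MD.mball x r"], rule exI[of _ "MD.mball y r"]) (use r xy in auto)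
  qed
qed

lemma neg_cont: "continuous_map MD.mtopology MD.mtopology uminus"
  unfolding continuous_map_def
proof (intro conjI allI impI)
  show "uminus \<in> topspace MD.mtopology \<rightarrow> topspace MD.mtopology"
    using subGG by (auto simp: subgroup_add_def)
  fix U assume U: "openin MD.mtopology U"
  show "openin MD.mtopology {p \<in> topspace MD.mtopology. - p \<in> U}"
    unfolding MD.openin_mtopology
  proof (intro conjI allI impI)
    show "{p \<in> topspace MD.mtopology. - p \<in> U} \<subseteq> GG" by auto
    fix x assume "x \<in> {p \<in> topspace MD.mtopology. - p \<in> U}"
    then have xy: "x \<in> GG" "- x \<in> U" by auto
    have "\<exists>r>0. \<forall>x'. x' \<in> GG \<longrightarrow> D x x' < r \<longrightarrow> - x' \<in> U"
    proof (rule ccontr)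
      assume neg: "\<not> ?thesis"
      have "\<forall>n. \<exists>x'. x' \<in> GG \<and> D x x' < inverse (real (Suc n)) \<and> - x' \<notin> U"
      proof
        fix n
        have pos: "0 < inverse (real (Suc n))" by simp
        then show "\<exists>x'. x' \<in> GG \<and> D x x' < inverse (real (Suc n)) \<and> - x' \<notin> U"
          using neg by blast
      qed
      from choice[OF this] obtain X where X0: "\<forall>n. X n \<in> GG \<and> D x (X n) < inverse (real (Suc n)) \<and> - X n \<notin> U"
        by blast
      then have XY: "\<And>n. X n \<in> GG" "\<And>n. D x (X n) < inverse (real (Suc n))"
        "\<And>n. - X n \<notin> U"
        by auto
      obtain h1 where h1: "\<And>n. h1 n \<in> I" "\<And>n b. b \<in> I \<Longrightarrow> le (h1 n) b \<Longrightarrow> x \<in> G b \<and> X n \<in> G b \<and> d b x (X n) < inverse (real (Suc n))"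
        using ex_seq_idx[OF xy(1) XY(1,2)] by blast
      obtain u where u: "u \<in> I" "\<And>n. le (h1 n) u" using longseq[of "h1 0" h1 h1] h1(1) by blast
      have hu1: "\<And>n. x \<in> G u \<and> X n \<in> G u \<and> d u x (X n) < inverse (real (Suc n))" using h1(2)[OF u(1) u(2)] by blast
      have W: "openin (T u) (U \<inter> G u)" using U u open_iff by blast
      have "- x \<in> U \<inter> G u" using xy hu1 subg[OF u(1)] by (auto simp: subgroup_add_def)
      then obtain r where r: "r > 0" "\<forall>x'. x' \<in> G u \<longrightarrow> d u x x' < r \<longrightarrow> - x' \<in> U \<inter> G u"
        using negT[OF u(1) _ W] hu1 by meson
      obtain n where n: "inverse (real (Suc n)) < r" using reals_Archimedean[OF r(1)] by blast
      have "- X n \<in> U" using r(2) hu1[of n] n by auto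
      then show False using XY(3) by blast
    qed
    then obtain r where r: "r > 0" "\<forall>x'. x' \<in> GG \<longrightarrow> D x x' < r \<longrightarrow> - x' \<in> U" by blast
    show "\<exists>r>0. MD.mball x r \<subseteq> {p \<in> topspace MD.mtopology. - p \<in> U}"
      using r xy by auto
  qed
qed

lemma main: "ACP I T \<and> Metric_space GG D \<and> MD.mtopology = colimit_topology I T"
proof -
  have tg: "topological_group_on MD.mtopology"
    using subGG add_cont neg_cont by (simp add: topological_group_on_def)
  have GGe: "(\<Union>a\<in>I. topspace (T a)) = GG" by (simp add: topsp GG_def)
  have inc: "continuous_map (T a) MD.mtopology id" if a: "a \<in> I" for a
    unfolding continuous_map_def
  proof (intro conjI allI impI)
    have "G a \<subseteq> GG" using a by (auto simp: GG_def)
    then show "id \<in> topspace (T a) \<rightarrow> topspace MD.mtopology" using topsp[OF a] by auto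
    fix U assume "openin MD.mtopology U"
    then have "openin (T a) (U \<inter> G a)" using open_iff a by blast
    moreover have "{x \<in> topspace (T a). id x \<in> U} = U \<inter> G a" using topsp[OF a] by auto
    ultimately show "openin (T a) {x \<in> topspace (T a). id x \<in> U}" by simp
  qed
  have fin: "openin MD.mtopology U" if S: "topspace S = GG" "\<forall>a\<in>I. continuous_map (T a) S id" "openin S U" for S U
    unfolding open_iff
  proof
    show "U \<subseteq> GG" using S openin_subset by blast
    show "\<forall>a\<in>I. openin (T a) (U \<inter> G a)"
    proof
      fix a assume a: "a \<in> I"
      have "openin (T a) {x \<in> topspace (T a). id x \<in> U}" using S(2) S(3) a by (auto simp: continuous_map_def)
      moreover have "{x \<in> topspace (T a). id x \<in> U} = U \<inter> G a" using topsp[OF a] by auto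
      ultimately show "openin (T a) (U \<inter> G a)" by simp
    qed
  qed
  show ?thesis unfolding ACP_def Let_def colim_eq GGe
    using tg inc fin MS by auto
qed

end
theorem corollary2p10:
  fixes I :: "'i set" and le :: "'i \<Rightarrow> 'i \<Rightarrow> bool"
    and G :: "'i \<Rightarrow> 'g::group_add set" and d :: "'i \<Rightarrow> 'g \<Rightarrow> 'g \<Rightarrow> real" and L :: real
  assumes dir: "directed_index I le"
    and long: "long_index I le"
    and metric: "\<And>a. a \<in> I \<Longrightarrow> Metric_space (G a) (d a)"
    and topgrp: "\<And>a. a \<in> I \<Longrightarrow> topological_group_on (Metric_space.mtopology (G a) (d a))"
    and mono: "\<And>a b. a \<in> I \<Longrightarrow> b \<in> I \<Longrightarrow> le a b \<Longrightarrow> G a \<subseteq> G b"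
    and strict: "\<And>a b. a \<in> I \<Longrightarrow> b \<in> I \<Longrightarrow> le a b \<Longrightarrow>
       subtopology (Metric_space.mtopology (G b) (d b)) (G a) = Metric_space.mtopology (G a) (d a)"
    and Lpos: "L > 0"
    and lip: "\<And>a b x y. a \<in> I \<Longrightarrow> b \<in> I \<Longrightarrow> le a b \<Longrightarrow> x \<in> G a \<Longrightarrow> y \<in> G a \<Longrightarrow>
       d b x y \<le> L * d a x y"
  shows "ACP I (\<lambda>a. Metric_space.mtopology (G a) (d a))
     \<and> Metric_space (\<Union>a\<in>I. G a) (limsup_metric I le G d)
     \<and> Metric_space.mtopology (\<Union>a\<in>I. G a) (limsup_metric I le G d)
         = colimit_topology I (\<lambda>a. Metric_space.mtopology (G a) (d a))"
proof -
  interpret cs I le G d L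
    by (rule cs.intro[OF dir long metric topgrp mono Lpos lip])
  show ?thesis using main[unfolded GG_def] .
qed

end
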